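(* Consider RejectionSampling run on $P\subseteq\mathbb{R}^d$ and $k$ with parameter $c>1$, and assume the LSH data structure is successful. Then the expected number of iterations of the while-loop is $O(c^2d^2k)$.
   Context: $P\subseteq\mathbb{R}^d$ has $n$ points; $\mathrm{Dist}(x,y)=\|x-y\|_2$, $\mathrm{Dist}(x,C)=\min_{y\in C}\mathrm{Dist}(x,y)$. Tree embedding: compute $\mathrm{MaxDist}$, an upper bound on the maximum pairwise distance within factor $2$ of it; add a uniformly random shift $s\in[0,\mathrm{MaxDist}]$ to each coordinate of all points; the root (height $0$) is the axis-aligned cube of side $2\,\mathrm{MaxDist}$ centered at an input point; recursively each node cube of side $L$ at height $i$ is split into $2^d$ subcubes of side $L/2$, nonempty ones becoming children connected by edges of weight $\sqrt d\,\mathrm{MaxDist}/2^i$, until each cube holds at most one point. $\mathrm{TreeDist}_T$ is the shortest-path distance in tree $T$; the multi-tree embedding has three such trees with independent shifts, $\mathrm{MultiTreeDist}$ is the minimum of the three tree distances, $\mathrm{MultiTreeDist}(p,S)=\min_{q\in S}\mathrm{MultiTreeDist}(p,q)$. MultiTreeSample() returns each $x\in P$ with probability $\mathrm{MultiTreeDist}(x,S)^2/\sum_{y\in P}\mathrm{MultiTreeDist}(y,S)^2$, where $S$ is the set of points opened so far by MultiTreeOpen (with $\mathrm{MultiTreeDist}(x,\emptyset)^2$ a constant $M$ independent of $x$). LSH data structure (parameter $c$): supports Insert$(p)$ and Query$(p)$; it is successful if Query$(p)$ always returns an inserted point at distance at most $c\cdot\delta$ from $p$, where $\delta$ is the minimum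 distance from $p$ to an inserted point. RejectionSampling$(P,k)$: $S\leftarrow\emptyset$; build the multi-tree embedding; while $|S|<k$: $x\leftarrow$ MultiTreeSample(); with probability $\min\{1,\mathrm{Dist}(x,\mathrm{Query}(x))^2/(c^2\,\mathrm{MultiTreeDist}(x,S)^2)\}$ (probability $1$ when $S=\emptyset$): $S\leftarrow S\cup\{x\}$, MultiTreeOpen$(x)$, Insert$(x)$. Output $S$. *)

theory Defs
  imports "HOL-Probability.Probability"
begin

text \<open>Points of R^d are represented as functions nat => real that vanish outside {..<d}.\<close>
type_synonym pt = "nat \<Rightarrow> real"

definition in_Rd :: "nat \<Rightarrow> pt \<Rightarrow> bool" where
  "in_Rd d x \<longleftrightarrow> (\<forall>i\<ge>d. x i = 0)"

definition Dist :: "nat \<Rightarrow> pt \<Rightarrow> pt \<Rightarrow> real" where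
  "Dist d x y = sqrt (\<Sum>i<d. (x i - y i)^2)"

definition max_pair_dist :: "nat \<Rightarrow> pt set \<Rightarrow> real" where
  "max_pair_dist d P = Max {Dist d x y | x y. x \<in> P \<and> y \<in> P}"

text \<open>Quadtree (one tree of the embedding) with parameter MaxDist = M, root cube of side 2M
  centred at the input point p0, and all points shifted by s in every coordinate.\<close>
definition same_node :: "nat \<Rightarrow> real \<Rightarrow> pt \<Rightarrow> real \<Rightarrow> nat \<Rightarrow> pt \<Rightarrow> pt \<Rightarrow> bool" where
  "same_node d M p0 s h x y \<longleftrightarrow>
     h = 0 \<or> (\<forall>i<d. \<lfloor>(x i + s - (p0 i - M)) / (2 * M / 2^h)\<rfloor>
                   = \<lfloor>(y i + s - (p0 i - M)) / (2 * M / 2^h)\<rfloor>)"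

definition leaf_height :: "nat \<Rightarrow> pt set \<Rightarrow> real \<Rightarrow> pt \<Rightarrow> real \<Rightarrow> pt \<Rightarrow> nat" where
  "leaf_height d P M p0 s x = (LEAST h. \<forall>y\<in>P. y \<noteq> x \<longrightarrow> \<not> same_node d M p0 s h x y)"

definition lca_height :: "nat \<Rightarrow> real \<Rightarrow> pt \<Rightarrow> real \<Rightarrow> pt \<Rightarrow> pt \<Rightarrow> nat" where
  "lca_height d M p0 s x y = (LEAST h. \<not> same_node d M p0 s (Suc h) x y)"

text \<open>Weight of an edge between a node at height j and its child at height j+1.\<close>
definition edge_weight :: "nat \<Rightarrow> real \<Rightarrow> nat \<Rightarrow> real" where
  "edge_weight d M j = sqrt (real d) * M / 2^j"

definition TreeDist :: "nat \<Rightarrow> pt set \<Rightarrow> real \<Rightarrow> pt \<Rightarrow> real \<Rightarrow> pt \<Rightarrow> pt \<Rightarrow> real" where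
  "TreeDist d P M p0 s x y =
     (if x = y then 0 else
        (\<Sum>j\<in>{lca_height d M p0 s x y..<leaf_height d P M p0 s x}. edge_weight d M j)
      + (\<Sum>j\<in>{lca_height d M p0 s x y..<leaf_height d P M p0 s y}. edge_weight d M j))"

definition MultiTreeDist ::
  "nat \<Rightarrow> pt set \<Rightarrow> real \<Rightarrow> pt \<Rightarrow> real \<times> real \<times> real \<Rightarrow> pt \<Rightarrow> pt \<Rightarrow> real" where
  "MultiTreeDist d P M p0 ss x y =
     min (TreeDist d P M p0 (fst ss) x y)
         (min (TreeDist d P M p0 (fst (snd ss)) x y) (TreeDist d P M p0 (snd (snd ss)) x y))"

text \<open>Distance to the set of opened points S (given as the list of opened points, in order);
  for S empty its square is the constant 1 (any constant independent of x gives the same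
  sampling distribution).\<close>
definition MultiTreeDist_set ::
  "nat \<Rightarrow> pt set \<Rightarrow> real \<Rightarrow> pt \<Rightarrow> real \<times> real \<times> real \<Rightarrow> pt list \<Rightarrow> pt \<Rightarrow> real" where
  "MultiTreeDist_set d P M p0 ss S x =
     (if S = [] then 1 else Min ((\<lambda>y. MultiTreeDist d P M p0 ss x y) ` set S))"

definition sample_prob ::
  "nat \<Rightarrow> pt set \<Rightarrow> real \<Rightarrow> pt \<Rightarrow> real \<times> real \<times> real \<Rightarrow> pt list \<Rightarrow> pt \<Rightarrow> real" where
  "sample_prob d P M p0 ss S x =
     (MultiTreeDist_set d P M p0 ss S x)^2 / (\<Sum>y\<in>P. (MultiTreeDist_set d P M p0 ss S y)^2)"

text \<open>LSH data structure: Query, as a function of the list of inserted points and the query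
  point.\<close>
definition lsh_successful :: "nat \<Rightarrow> real \<Rightarrow> pt set \<Rightarrow> (pt list \<Rightarrow> pt \<Rightarrow> pt) \<Rightarrow> bool" where
  "lsh_successful d c P Query \<longleftrightarrow>
     (\<forall>S x. S \<noteq> [] \<and> set S \<subseteq> P \<and> x \<in> P \<longrightarrow>
        Query S x \<in> set S \<and> Dist d x (Query S x) \<le> c * Min ((\<lambda>y. Dist d x y) ` set S))"

definition accept_prob ::
  "nat \<Rightarrow> pt set \<Rightarrow> real \<Rightarrow> real \<Rightarrow> pt \<Rightarrow> real \<times> real \<times> real \<Rightarrow> (pt list \<Rightarrow> pt \<Rightarrow> pt)
   \<Rightarrow> pt list \<Rightarrow> pt \<Rightarrow> real" where
  "accept_prob d P c M p0 ss Query S x =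
     (if S = [] then 1
      else min 1 ((Dist d x (Query S x))^2 / (c^2 * (MultiTreeDist_set d P M p0 ss S x)^2)))"

text \<open>One-step equation for the expected number of remaining while-loop iterations from the
  state S (list of opened points).  The expected number of iterations is the least fixed point.\<close>
definition iter_step ::
  "nat \<Rightarrow> pt set \<Rightarrow> nat \<Rightarrow> real \<Rightarrow> real \<Rightarrow> pt \<Rightarrow> real \<times> real \<times> real \<Rightarrow> (pt list \<Rightarrow> pt \<Rightarrow> pt)
   \<Rightarrow> (pt list \<Rightarrow> ennreal) \<Rightarrow> pt list \<Rightarrow> ennreal" where
  "iter_step d P k c M p0 ss Query F S =
     (if k \<le> length S then 0
      else 1 + (\<Sum>x\<in>P. ennreal (sample_prob d P M p0 ss S x) *
                  (ennreal (accept_prob d P c M p0 ss Query S x) * F (S @ [x])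
                   + ennreal (1 - accept_prob d P c M p0 ss Query S x) * F S)))"

definition expected_iters_fixed ::
  "nat \<Rightarrow> pt set \<Rightarrow> nat \<Rightarrow> real \<Rightarrow> real \<Rightarrow> pt \<Rightarrow> (pt list \<Rightarrow> pt \<Rightarrow> pt)
   \<Rightarrow> real \<times> real \<times> real \<Rightarrow> ennreal" where
  "expected_iters_fixed d P k c M p0 Query ss = lfp (iter_step d P k c M p0 ss Query) []"

definition shift_distr :: "real \<Rightarrow> real measure" where
  "shift_distr M = (if 0 < M then uniform_measure lborel {0..M} else return lborel 0)"

definition expected_iterations ::
  "nat \<Rightarrow> pt set \<Rightarrow> nat \<Rightarrow> real \<Rightarrow> real \<Rightarrow> pt \<Rightarrow> (pt list \<Rightarrow> pt \<Rightarrow> pt) \<Rightarrow> ennreal" where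
  "expected_iterations d P k c M p0 Query =
     (\<integral>\<^sup>+ ss. expected_iters_fixed d P k c M p0 Query ss
        \<partial>(shift_distr M \<Otimes>\<^sub>M (shift_distr M \<Otimes>\<^sub>M shift_distr M)))"

end

theory Submission
  imports Defs
begin


lemma floor_eq_abs_lt: "\<lfloor>a::real\<rfloor> = \<lfloor>b\<rfloor> \<Longrightarrow> \<bar>a - b\<bar> < 1"
  using floor_correct[of a] floor_correct[of b] by linarith

lemma same_node_sym: "same_node d M p0 s h x y = same_node d M p0 s h y x"
  unfolding same_node_def by auto

lemma same_node_0[simp]: "same_node d M p0 s 0 x y"
  unfolding same_node_def by auto

lemma floor_half: "\<lfloor>(u::real) / L\<rfloor> = \<lfloor>u / (L/2)\<rfloor> div 2"
proof -
  have "u / L = (u / (L/2)) / real_of_int 2" by simp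
  then show ?thesis using floor_divide_real_eq_div[of 2 "u / (L/2)"] by simp
qed

lemma same_node_Suc: "same_node d M p0 s (Suc h) x y \<Longrightarrow> same_node d M p0 s h x y"
proof -
  assume a: "same_node d M p0 s (Suc h) x y"
  show ?thesis
  proof (cases "h = 0")
    case True then show ?thesis by simp
  next
    case False
    have eq: "2 * M / 2 ^ Suc h = (2 * M / 2^h) / 2" by simp
    { fix i assume "i < d"
      with a have "\<lfloor>(x i + s - (p0 i - M)) / (2 * M / 2 ^ Suc h)\<rfloor>
                   = \<lfloor>(y i + s - (p0 i - M)) / (2 * M / 2 ^ Suc h)\<rfloor>"
        unfolding same_node_def by auto
      then have "\<lfloor>(x i + s - (p0 i - M)) / (2 * M / 2 ^ h)\<rfloor>
                   = \<lfloor>(y i + s - (p0 i - M)) / (2 * M / 2 ^ h)\<rfloor>"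
        unfolding eq by (metis floor_half)
    }
    then show ?thesis unfolding same_node_def by auto
  qed
qed

lemma same_node_mono: "j \<le> h \<Longrightarrow> same_node d M p0 s h x y \<Longrightarrow> same_node d M p0 s j x y"
proof (induction h)
  case 0 then show ?case by simp
next
  case (Suc h)
  then show ?case using same_node_Suc by (metis le_Suc_eq)
qed

lemma same_node_close:
  assumes "0 < h" "0 < M" "same_node d M p0 s h x y" "i < d"
  shows "\<bar>x i - y i\<bar> < 2 * M / 2^h"
proof -
  let ?L = "2 * M / 2^h"
  have L: "?L > 0" using assms by simp
  have "\<lfloor>(x i + s - (p0 i - M)) / ?L\<rfloor> = \<lfloor>(y i + s - (p0 i - M)) / ?L\<rfloor>"
    using assms unfolding same_node_def by auto
  then have "\<bar>(x i + s - (p0 i - M)) / ?L - (y i + s - (p0 i - M)) / ?L\<bar> < 1"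
    by (rule floor_eq_abs_lt)
  also have "(x i + s - (p0 i - M)) / ?L - (y i + s - (p0 i - M)) / ?L = (x i - y i) / ?L"
    by (simp only: diff_divide_distrib[symmetric]) simp
  finally have h: "\<bar>(x i - y i) / ?L\<bar> < 1" .
  have "\<bar>x i - y i\<bar> = \<bar>(x i - y i) / ?L\<bar> * ?L"
    using L by (metis abs_divide abs_of_pos nonzero_eq_divide_eq order_less_irrefl)
  also have "\<dots> < 1 * ?L" using h L by (rule mult_strict_right_mono)
  finally show ?thesis by simp
qed

lemma in_Rd_neq: "in_Rd d x \<Longrightarrow> in_Rd d y \<Longrightarrow> x \<noteq> y \<Longrightarrow> \<exists>i<d. x i \<noteq> y i"
  unfolding in_Rd_def by (metis ext not_le)

lemma Dist_nonneg: "Dist d x y \<ge> 0"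
  unfolding Dist_def by (simp add: sum_nonneg)

lemma Dist_self[simp]: "Dist d x x = 0"
  unfolding Dist_def by simp

lemma Dist_sym: "Dist d x y = Dist d y x"
  unfolding Dist_def by (simp add: power2_commute)

lemma Dist_pos: "in_Rd d x \<Longrightarrow> in_Rd d y \<Longrightarrow> x \<noteq> y \<Longrightarrow> Dist d x y > 0"
proof -
  assume a: "in_Rd d x" "in_Rd d y" "x \<noteq> y"
  then obtain i where i: "i < d" "x i \<noteq> y i" using in_Rd_neq by blast
  have "0 < (x i - y i)^2" using i by simp
  also have "\<dots> \<le> (\<Sum>j<d. (x j - y j)^2)"
    using i by (intro member_le_sum) auto
  finally show ?thesis unfolding Dist_def by simp
qed

lemma Dist_le_cell:
  assumes "\<And>i. i < d \<Longrightarrow> \<bar>x i - y i\<bar> \<le> L" and L: "L \<ge> 0"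
  shows "Dist d x y \<le> sqrt (real d) * L"
proof -
  have "(\<Sum>i<d. (x i - y i)^2) \<le> (\<Sum>i<d. L^2)"
  proof (intro sum_mono)
    fix i assume "i \<in> {..<d}"
    then have "\<bar>x i - y i\<bar> \<le> L" using assms by auto
    then show "(x i - y i)^2 \<le> L^2"
      by (metis abs_ge_zero power2_abs power_mono)
  qed
  then have "Dist d x y \<le> sqrt (real d * L^2)" unfolding Dist_def by simp
  also have "\<dots> = sqrt (real d) * L" using L by (simp add: real_sqrt_mult)
  finally show ?thesis .
qed

lemma Dist_L1: "(\<Sum>i<d. \<bar>x i - y i\<bar>) \<le> sqrt (real d) * Dist d x y"
proof -
  have "(\<Sum>i<d. 1 * \<bar>x i - y i\<bar>)^2 \<le> (\<Sum>i<d. 1^2) * (\<Sum>i<d. \<bar>x i - y i\<bar>^2)"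
    by (rule Cauchy_Schwarz_ineq_sum)
  then have "(\<Sum>i<d. \<bar>x i - y i\<bar>)^2 \<le> real d * (\<Sum>i<d. (x i - y i)^2)" by simp
  then have "sqrt ((\<Sum>i<d. \<bar>x i - y i\<bar>)^2) \<le> sqrt (real d * (\<Sum>i<d. (x i - y i)^2))"
    using real_sqrt_le_mono by blast
  then show ?thesis unfolding Dist_def
    by (simp add: real_sqrt_mult sum_nonneg)
qed


lemma sep_level:
  assumes "in_Rd d x" "in_Rd d y" "x \<noteq> y" "M > 0"
  shows "\<exists>h0. \<forall>h\<ge>h0. \<not> same_node d M p0 s h x y"
proof -
  obtain i where i: "i < d" "x i \<noteq> y i" using in_Rd_neq assms by blast
  define \<delta> where "\<delta> = \<bar>x i - y i\<bar>"
  have dpos: "\<delta> > 0" using i unfolding \<delta>_def by simp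
  obtain n where n: "2 * M / \<delta> < 2 ^ n" using real_arch_pow[of 2 "2 * M / \<delta>"] by auto
  have "2 * M / 2 ^ Suc n < \<delta>"
  proof -
    have "2 * M < \<delta> * 2 ^ n" using n dpos by (simp add: divide_less_eq mult.commute)
    also have "\<dots> \<le> \<delta> * 2 ^ Suc n" using dpos by simp
    finally show ?thesis by (simp add: divide_less_eq mult.commute)
  qed
  then have ns: "\<not> same_node d M p0 s (Suc n) x y"
    using same_node_close[of "Suc n" M d p0 s x y i] i assms(4) unfolding \<delta>_def by fastforce
  show ?thesis
    by (rule exI[of _ "Suc n"]) (use ns same_node_mono in blast)
qed

lemma leaf_ex:
  assumes "finite P" "\<forall>z\<in>P. in_Rd d z" "in_Rd d x" "M > 0"
  shows "\<exists>h. \<forall>z\<in>P. z \<noteq> x \<longrightarrow> \<not> same_node d M p0 s h x z"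
proof -
  have "\<forall>\<^sub>F h in sequentially. \<forall>z\<in>P. z \<noteq> x \<longrightarrow> \<not> same_node d M p0 s h x z"
  proof (rule eventually_ball_finite[OF assms(1)])
    show "\<forall>z\<in>P. \<forall>\<^sub>F h in sequentially. z \<noteq> x \<longrightarrow> \<not> same_node d M p0 s h x z"
    proof
    fix z assume "z \<in> P"
    show "\<forall>\<^sub>F h in sequentially. z \<noteq> x \<longrightarrow> \<not> same_node d M p0 s h x z"
    proof (cases "z = x")
      case True then show ?thesis by simp
    next
      case False
      then obtain h0 where "\<forall>h\<ge>h0. \<not> same_node d M p0 s h x z"
        using sep_level[of d x z M p0 s] assms \<open>z \<in> P\<close> by auto
      then show ?thesis unfolding eventually_sequentially by blast
    qed
    qed
  qed
  then obtain N where "\<forall>h\<ge>N. \<forall>z\<in>P. z \<noteq> x \<longrightarrow> \<not> same_node d M p0 s h x z"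
    unfolding eventually_sequentially by blast
  then show ?thesis by blast
qed

lemma lca_sep:
  assumes "in_Rd d x" "in_Rd d y" "x \<noteq> y" "M > 0"
  shows "\<not> same_node d M p0 s (Suc (lca_height d M p0 s x y)) x y"
proof -
  obtain h0 where "\<forall>h\<ge>h0. \<not> same_node d M p0 s h x y" using sep_level assms by blast
  then have "\<not> same_node d M p0 s (Suc h0) x y" by simp
  then have "\<exists>h. \<not> same_node d M p0 s (Suc h) x y" by blast
  then show ?thesis unfolding lca_height_def by (rule LeastI_ex)
qed

lemma lca_same: "same_node d M p0 s (lca_height d M p0 s x y) x y"
proof (cases "lca_height d M p0 s x y")
  case 0 then show ?thesis by simp
next
  case (Suc j)
  then have "j < lca_height d M p0 s x y" by simp
  then have "\<not> \<not> same_node d M p0 s (Suc j) x y"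
    unfolding lca_height_def by (rule not_less_Least)
  then show ?thesis using Suc by simp
qed

lemma leaf_gt:
  assumes "finite P" "\<forall>z\<in>P. in_Rd d z" "x \<in> P" "y \<in> P" "x \<noteq> y" "M > 0"
  shows "lca_height d M p0 s x y < leaf_height d P M p0 s x"
proof (rule ccontr)
  assume "\<not> ?thesis"
  then have le: "leaf_height d P M p0 s x \<le> lca_height d M p0 s x y" by simp
  have "\<exists>h. \<forall>z\<in>P. z \<noteq> x \<longrightarrow> \<not> same_node d M p0 s h x z"
    using leaf_ex assms by blast
  then have "\<forall>z\<in>P. z \<noteq> x \<longrightarrow> \<not> same_node d M p0 s (leaf_height d P M p0 s x) x z"
    unfolding leaf_height_def by (rule LeastI_ex)
  then have "\<not> same_node d M p0 s (leaf_height d P M p0 s x) x y" using assms by auto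
  moreover have "same_node d M p0 s (leaf_height d P M p0 s x) x y"
    using same_node_mono[OF le lca_same] .
  ultimately show False by simp
qed

lemma lca_sym: "lca_height d M p0 s x y = lca_height d M p0 s y x"
  unfolding lca_height_def using same_node_sym by presburger

lemma geom_sum: "(\<Sum>j\<in>{a..<b}. r / 2^j) = (if a \<le> b then 2 * r / 2^a - 2 * r / 2^b else (0::real))"
proof (induction b)
  case 0 then show ?case by simp
next
  case (Suc b)
  show ?case
  proof (cases "a \<le> b")
    case True
    then have "{a..<Suc b} = insert b {a..<b}" by auto
    then have "(\<Sum>j\<in>{a..<Suc b}. r / 2^j) = r / 2^b + (\<Sum>j\<in>{a..<b}. r / 2^j)" by simp
    have IH: "(\<Sum>j\<in>{a..<b}. r / 2^j) = 2 * r / 2^a - 2 * r / 2^b" using Suc.IH True by simp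
    have "r / 2^b + (2 * r / 2^a - 2 * r / 2^b) = 2 * r / 2^a - 2 * r / (2::real)^Suc b"
      by (simp add: field_simps)
    then show ?thesis using True IH \<open>(\<Sum>j\<in>{a..<Suc b}. r / 2^j) = _\<close> by simp
  next
    case False
    then show ?thesis by (cases "a = Suc b") auto
  qed
qed

lemma geom_sum_le: "r \<ge> 0 \<Longrightarrow> (\<Sum>j\<in>{a..<b}. r / 2^j) \<le> 2 * r / (2::real)^a"
  unfolding geom_sum by auto

lemma TreeDist_upper:
  assumes "M \<ge> 0"
  shows "TreeDist d P M p0 s x y \<le> 4 * sqrt (real d) * M / 2 ^ (lca_height d M p0 s x y)"
proof -
  let ?l = "lca_height d M p0 s x y" and ?r = "sqrt (real d) * M"
  have r: "?r \<ge> 0" using assms by simp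
  have e: "\<And>j. edge_weight d M j = ?r / 2^j" unfolding edge_weight_def by simp
  have A: "(\<Sum>j\<in>{?l..<leaf_height d P M p0 s x}. edge_weight d M j) \<le> 2 * ?r / 2^?l"
    unfolding e by (rule geom_sum_le[OF r])
  have B: "(\<Sum>j\<in>{?l..<leaf_height d P M p0 s y}. edge_weight d M j) \<le> 2 * ?r / 2^?l"
    unfolding e by (rule geom_sum_le[OF r])
  have N: "0 \<le> 4 * sqrt (real d) * M / 2 ^ ?l" using assms by simp
  have E: "4 * sqrt (real d) * M / 2 ^ ?l = 2 * ?r / 2^?l + 2 * ?r / 2^?l" by simp
  show ?thesis
  proof (cases "x = y")
    case True then show ?thesis using N unfolding TreeDist_def by simp
  next
    case False
    then have "TreeDist d P M p0 s x y = (\<Sum>j\<in>{?l..<leaf_height d P M p0 s x}. edge_weight d M j)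
       + (\<Sum>j\<in>{?l..<leaf_height d P M p0 s y}. edge_weight d M j)" unfolding TreeDist_def by simp
    then show ?thesis using A B E by (smt (verit))
  qed
qed

lemma TreeDist_nonneg:
  assumes "M \<ge> 0"
  shows "TreeDist d P M p0 s x y \<ge> 0"
  unfolding TreeDist_def edge_weight_def using assms by (auto intro!: add_nonneg_nonneg sum_nonneg)

lemma TreeDist_self[simp]: "TreeDist d P M p0 s x x = 0"
  unfolding TreeDist_def by simp

lemma TreeDist_lower:
  assumes "finite P" "\<forall>z\<in>P. in_Rd d z" "x \<in> P" "y \<in> P" "x \<noteq> y" "M > 0"
  shows "2 * sqrt (real d) * M / 2 ^ (lca_height d M p0 s x y) \<le> TreeDist d P M p0 s x y"
proof -
  let ?l = "lca_height d M p0 s x y"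
  have gx: "?l < leaf_height d P M p0 s x" using leaf_gt assms by blast
  have gy: "?l < leaf_height d P M p0 s y"
    using leaf_gt[of P d y x M p0 s] assms lca_sym by metis
  have nn: "\<And>j. edge_weight d M j \<ge> 0" unfolding edge_weight_def using assms by simp
  have "edge_weight d M ?l \<le> (\<Sum>j\<in>{?l..<leaf_height d P M p0 s x}. edge_weight d M j)"
    using gx nn by (intro member_le_sum) auto
  moreover have "edge_weight d M ?l \<le> (\<Sum>j\<in>{?l..<leaf_height d P M p0 s y}. edge_weight d M j)"
    using gy nn by (intro member_le_sum) auto
  moreover have "2 * sqrt (real d) * M / 2 ^ ?l = edge_weight d M ?l + edge_weight d M ?l"
    unfolding edge_weight_def by simp
  ultimately show ?thesis unfolding TreeDist_def using assms by auto
qed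

lemma Dist_le_max_pair:
  assumes "finite P" "x \<in> P" "y \<in> P"
  shows "Dist d x y \<le> max_pair_dist d P"
proof -
  have "finite {Dist d x y | x y. x \<in> P \<and> y \<in> P}"
    using assms(1) by (intro finite_image_set2) auto
  then show ?thesis unfolding max_pair_dist_def using assms by (intro Max_ge) auto
qed

lemma Dist_le_TreeDist:
  assumes "finite P" "\<forall>z\<in>P. in_Rd d z" "x \<in> P" "y \<in> P" "M > 0" "d \<ge> 1"
    "max_pair_dist d P \<le> M"
  shows "Dist d x y \<le> TreeDist d P M p0 s x y"
proof (cases "x = y")
  case True then show ?thesis by simp
next
  case False
  let ?l = "lca_height d M p0 s x y"
  have low: "2 * sqrt (real d) * M / 2 ^ ?l \<le> TreeDist d P M p0 s x y"
    using TreeDist_lower assms False by blast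
  have "Dist d x y \<le> 2 * sqrt (real d) * M / 2 ^ ?l"
  proof (cases "?l = 0")
    case True
    have "Dist d x y \<le> M" using Dist_le_max_pair assms by (metis order_trans)
    moreover have "sqrt (real d) \<ge> 1" using assms by simp
    moreover have "M \<le> sqrt (real d) * M" using assms calculation(2) by simp
    moreover have "2 * sqrt (real d) * M / 2^?l = 2 * (sqrt (real d) * M)" using True by simp
    moreover have "0 \<le> sqrt (real d) * M" using assms by simp
    ultimately have "Dist d x y \<le> 2 * (sqrt (real d) * M)" by (smt (verit))
    then show ?thesis using True by simp
  next
    case False
    have "\<And>i. i < d \<Longrightarrow> \<bar>x i - y i\<bar> \<le> 2 * M / 2 ^ ?l"
      using same_node_close[OF _ assms(5) lca_same] False by (meson less_imp_le not_gr_zero)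
    then have "Dist d x y \<le> sqrt (real d) * (2 * M / 2 ^ ?l)"
      by (rule Dist_le_cell) (use \<open>M > 0\<close> in \<open>auto intro!: divide_nonneg_nonneg\<close>)
    then show ?thesis by (simp add: mult_ac)
  qed
  then show ?thesis using low by linarith
qed




lemma pred_floor_neq[measurable]:
  assumes "f \<in> borel_measurable M" "g \<in> borel_measurable M"
  shows "Measurable.pred M (\<lambda>x. \<lfloor>f x::real\<rfloor> \<noteq> \<lfloor>g x::real\<rfloor>)"
proof -
  have mf: "(\<lambda>x. real_of_int \<lfloor>f x\<rfloor>) \<in> borel_measurable M"
    by (rule measurable_compose[OF assms(1) borel_measurable_real_floor])
  have mg: "(\<lambda>x. real_of_int \<lfloor>g x\<rfloor>) \<in> borel_measurable M"
    by (rule measurable_compose[OF assms(2) borel_measurable_real_floor])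
  have "{x\<in>space M. \<lfloor>f x\<rfloor> \<noteq> \<lfloor>g x\<rfloor>} = space M - {x\<in>space M. real_of_int \<lfloor>f x\<rfloor> = real_of_int \<lfloor>g x\<rfloor>}"
    by auto
  also have "\<dots> \<in> sets M" using measurable_equality_set[OF mf mg] by auto
  finally show ?thesis by (simp add: Measurable.pred_def)
qed

lemma floor_set_meas:
  fixes L :: real and d :: nat
  shows "{s::real. \<exists>i. i < d \<and> \<lfloor>(f i + s) / L\<rfloor> \<noteq> \<lfloor>(g i + s) / L\<rfloor>} \<in> sets borel"
proof -
  have "{s::real. \<exists>i. i < d \<and> \<lfloor>(f i + s) / L\<rfloor> \<noteq> \<lfloor>(g i + s) / L\<rfloor>}
     = (\<Union>i\<in>{..<d}. {s\<in>space borel. \<lfloor>(f i + s) / L\<rfloor> \<noteq> \<lfloor>(g i + s) / L\<rfloor>})" by auto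
  also have "\<dots> \<in> sets borel"
  proof (intro sets.finite_UN)
    fix i
    have "Measurable.pred borel (\<lambda>s. \<lfloor>(f i + s) / L\<rfloor> \<noteq> \<lfloor>(g i + s) / L\<rfloor>)"
      by (rule pred_floor_neq) auto
    then show "{s\<in>space borel. \<lfloor>(f i + s) / L\<rfloor> \<noteq> \<lfloor>(g i + s) / L\<rfloor>} \<in> sets borel"
      by (simp add: Measurable.pred_def)
  qed auto
  finally show ?thesis .
qed

lemma coord_measure_aux:
  fixes a b L M :: real
  assumes L: "L > 0" and hML: "M \<ge> L" and ab: "a \<le> b"
  shows "emeasure lborel {s\<in>{0..M}. \<lfloor>(a+s)/L\<rfloor> \<noteq> \<lfloor>(b+s)/L\<rfloor>} \<le> ennreal (3 * (b - a) * M / L)"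
proof (cases "b - a > L")
  case True
  have "emeasure lborel {s\<in>{0..M}. \<lfloor>(a+s)/L\<rfloor> \<noteq> \<lfloor>(b+s)/L\<rfloor>} \<le> emeasure lborel {0..M}"
    by (rule emeasure_mono) auto
  also have "\<dots> = ennreal M" using L hML by simp
  also have "\<dots> \<le> ennreal (3 * (b - a) * M / L)"
  proof (rule ennreal_leI)
    have "1 \<le> (b - a) / L" using True L by simp
    then have "M * 1 \<le> M * ((b - a) / L)" using L hML by (intro mult_left_mono) auto
    also have "\<dots> \<le> 3 * (b - a) * M / L" using L hML True by (simp add: field_simps)
    finally show "M \<le> 3 * (b - a) * M / L" by simp
  qed
  finally show ?thesis .
next
  case False
  define n0 where "n0 = \<lfloor>a / L\<rfloor> + 1"
  define n1 where "n1 = \<lfloor>(b + M) / L\<rfloor>"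
  let ?E = "{s\<in>{0..M}. \<lfloor>(a+s)/L\<rfloor> \<noteq> \<lfloor>(b+s)/L\<rfloor>}"
  let ?I = "\<lambda>n::int. {real_of_int n * L - b ..< real_of_int n * L - a}"
  have sub: "?E \<subseteq> (\<Union>n\<in>{n0..n1}. ?I n)"
  proof
    fix s assume s: "s \<in> ?E"
    define n where "n = \<lfloor>(b+s)/L\<rfloor>"
    have "(a+s)/L \<le> (b+s)/L" using ab L by (simp add: divide_right_mono)
    then have "\<lfloor>(a+s)/L\<rfloor> \<le> n" unfolding n_def by (rule floor_mono)
    then have lt: "\<lfloor>(a+s)/L\<rfloor> < n" using s unfolding n_def by auto
    then have "(a+s)/L < real_of_int n" by (simp add: floor_less_iff)
    then have 1: "a + s < real_of_int n * L" using L by (simp add: divide_less_eq)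
    have "real_of_int n \<le> (b+s)/L" unfolding n_def by simp
    then have 2: "real_of_int n * L \<le> b + s" using L by (simp add: le_divide_eq)
    have "(b+s)/L \<le> (b+M)/L" using s L by (simp add: divide_right_mono)
    then have 3: "n \<le> n1" unfolding n_def n1_def by (rule floor_mono)
    have "a / L \<le> (a+s)/L" using s L by (simp add: divide_right_mono)
    then have "\<lfloor>a/L\<rfloor> \<le> \<lfloor>(a+s)/L\<rfloor>" by (rule floor_mono)
    then have 4: "n0 \<le> n" using lt unfolding n0_def by simp
    show "s \<in> (\<Union>n\<in>{n0..n1}. ?I n)" using 1 2 3 4 by (intro UN_I[of n]) auto
  qed
  have "emeasure lborel ?E \<le> emeasure lborel (\<Union>n\<in>{n0..n1}. ?I n)"
    by (rule emeasure_mono[OF sub]) auto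
  also have "\<dots> \<le> (\<Sum>n\<in>{n0..n1}. emeasure lborel (?I n))"
    by (rule emeasure_subadditive_finite) auto
  also have "\<dots> = (\<Sum>n\<in>{n0..n1}. ennreal (b - a))" using ab by simp
  also have "\<dots> = ennreal (real (card {n0..n1}) * (b - a))"
    using ab by (simp add: ennreal_of_nat_eq_real_of_nat ennreal_mult'')
  also have "\<dots> \<le> ennreal (3 * (b - a) * M / L)"
  proof (rule ennreal_leI)
    have c: "real (card {n0..n1}) = real (nat (n1 - n0 + 1))" by simp
    have f1: "real_of_int n1 \<le> (b + M) / L" unfolding n1_def by simp
    have f2: "a / L - 1 < real_of_int \<lfloor>a / L\<rfloor>" by linarith
    have "real (nat (n1 - n0 + 1)) \<le> max 0 (real_of_int (n1 - n0 + 1))" by linarith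
    also have "\<dots> \<le> (b - a) / L + M / L + 1"
    proof -
      have "real_of_int (n1 - n0 + 1) = real_of_int n1 - real_of_int \<lfloor>a / L\<rfloor>"
        unfolding n0_def by simp
      then have "real_of_int (n1 - n0 + 1) \<le> (b + M) / L - a / L + 1"
        using f1 f2 by linarith
      also have "\<dots> = (b - a) / L + M / L + 1" using L by (simp add: field_simps)
      finally show ?thesis using ab L hML by (simp add: max_def)
    qed
    also have "\<dots> \<le> 3 * (M / L)"
    proof -
      have "(b - a) / L \<le> 1" using False L by simp
      moreover have "1 \<le> M / L" using L hML by simp
      ultimately show ?thesis by linarith
    qed
    finally have "real (card {n0..n1}) \<le> 3 * (M / L)" using c by simp
    then have "real (card {n0..n1}) * (b - a) \<le> 3 * (M / L) * (b - a)"
      using ab by (intro mult_right_mono) auto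
    also have "\<dots> = 3 * (b - a) * M / L" by simp
    finally show "real (card {n0..n1}) * (b - a) \<le> 3 * (b - a) * M / L" .
  qed
  finally show ?thesis .
qed

lemma coord_measure:
  fixes a b L M :: real
  assumes L: "L > 0" and hML: "M \<ge> L"
  shows "emeasure lborel {s\<in>{0..M}. \<lfloor>(a+s)/L\<rfloor> \<noteq> \<lfloor>(b+s)/L\<rfloor>} \<le> ennreal (3 * \<bar>a - b\<bar> * M / L)"
proof (cases "a \<le> b")
  case True
  then show ?thesis using coord_measure_aux[OF L hML True] by simp
next
  case False
  have "{s\<in>{0..M}. \<lfloor>(a+s)/L\<rfloor> \<noteq> \<lfloor>(b+s)/L\<rfloor>} = {s\<in>{0..M}. \<lfloor>(b+s)/L\<rfloor> \<noteq> \<lfloor>(a+s)/L\<rfloor>}"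
    by auto
  then show ?thesis using coord_measure_aux[OF L hML, of b a] False by simp
qed


lemma coord_set_meas:
  fixes a b L M :: real
  shows "{s\<in>{0..M}. \<lfloor>(a+s)/L\<rfloor> \<noteq> \<lfloor>(b+s)/L\<rfloor>} \<in> sets borel"
proof -
  have "Measurable.pred borel (\<lambda>s. \<lfloor>(a + s) / L\<rfloor> \<noteq> \<lfloor>(b + s) / L\<rfloor>)"
    by (rule pred_floor_neq) auto
  then have "{s\<in>space borel. \<lfloor>(a + s) / L\<rfloor> \<noteq> \<lfloor>(b + s) / L\<rfloor>} \<in> sets borel"
    by (simp add: Measurable.pred_def)
  then have "{s\<in>space borel. \<lfloor>(a + s) / L\<rfloor> \<noteq> \<lfloor>(b + s) / L\<rfloor>} \<inter> {0..M} \<in> sets borel"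
    by auto
  moreover have "{s\<in>{0..M}. \<lfloor>(a+s)/L\<rfloor> \<noteq> \<lfloor>(b+s)/L\<rfloor>} = {s\<in>space borel. \<lfloor>(a + s) / L\<rfloor> \<noteq> \<lfloor>(b + s) / L\<rfloor>} \<inter> {0..M}"
    by auto
  ultimately show ?thesis by simp
qed

lemma sets_shift_distr[simp]: "sets (shift_distr M) = sets borel"
  unfolding shift_distr_def by auto

lemma space_shift_distr[simp]: "space (shift_distr M) = UNIV"
  unfolding shift_distr_def by auto

lemma prob_space_shift_distr: "prob_space (shift_distr M)"
  unfolding shift_distr_def
  by (auto intro!: prob_space_uniform_measure prob_space_return)

lemma not_same_node_eq:
  assumes "h \<noteq> 0"
  shows "{s. \<not> same_node d M p0 s h x y} =
    {s. \<exists>i. i < d \<and> \<lfloor>((\<lambda>i. x i - (p0 i - M)) i + s) / (2 * M / 2^h)\<rfloor>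
                 \<noteq> \<lfloor>((\<lambda>i. y i - (p0 i - M)) i + s) / (2 * M / 2^h)\<rfloor>}"
proof -
  have e: "\<And>z i s. z + s - (p0 i - M) = (z - (p0 i - M)) + (s::real)" by simp
  show ?thesis using assms unfolding same_node_def by (auto simp only: e)
qed

lemma sep_set_meas: "{s. \<not> same_node d M p0 s h x y} \<in> sets borel"
proof (cases "h = 0")
  case True then show ?thesis by simp
next
  case False
  show ?thesis unfolding not_same_node_eq[OF False] by (rule floor_set_meas)
qed

lemma sep_prob:
  assumes M: "M > 0" and h: "h \<ge> 1"
  shows "emeasure (shift_distr M) {s. \<not> same_node d M p0 s h x y}
           \<le> ennreal (3 * (\<Sum>i<d. \<bar>x i - y i\<bar>) * 2^h / (2*M))"
proof -
  define L where "L = 2 * M / 2^h"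
  define a where "a = (\<lambda>i. x i - (p0 i - M))"
  define b where "b = (\<lambda>i. y i - (p0 i - M))"
  have L: "L > 0" unfolding L_def using M by simp
  have "(2::real)^1 \<le> 2^h" using h by (intro power_increasing) auto
  then have LM: "L \<le> M" unfolding L_def using M by (simp add: divide_le_eq)
  let ?A = "{s. \<not> same_node d M p0 s h x y}"
  let ?E = "\<lambda>i. {s\<in>{0..M}. \<lfloor>(a i+s)/L\<rfloor> \<noteq> \<lfloor>(b i+s)/L\<rfloor>}"
  have hA: "?A \<in> sets lborel" using sep_set_meas by simp
  have AE: "?A \<inter> {0..M} = (\<Union>i\<in>{..<d}. ?E i)"
    using not_same_node_eq[of h d M p0 x y] h unfolding L_def a_def b_def by auto
  have "emeasure (shift_distr M) ?A = emeasure lborel (?A \<inter> {0..M}) / emeasure lborel {0..M}"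
    unfolding shift_distr_def using M hA by (simp add: Int_commute)
  also have "\<dots> = emeasure lborel (\<Union>i\<in>{..<d}. ?E i) / ennreal M" using M AE by simp
  also have "\<dots> \<le> ennreal (3 * (\<Sum>i<d. \<bar>x i - y i\<bar>) * M / L) / ennreal M"
  proof (rule divide_right_mono_ennreal)
    have "emeasure lborel (\<Union>i\<in>{..<d}. ?E i) \<le> (\<Sum>i<d. emeasure lborel (?E i))"
      by (rule emeasure_subadditive_finite) (auto intro: coord_set_meas)
    also have "\<dots> \<le> (\<Sum>i<d. ennreal (3 * \<bar>a i - b i\<bar> * M / L))"
      by (intro sum_mono coord_measure[OF L LM])
    also have "\<dots> = ennreal (\<Sum>i<d. 3 * \<bar>a i - b i\<bar> * M / L)"
      using L M by (intro sum_ennreal) auto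
    also have "(\<Sum>i<d. 3 * \<bar>a i - b i\<bar> * M / L) = 3 * (\<Sum>i<d. \<bar>x i - y i\<bar>) * M / L"
      unfolding a_def b_def by (simp add: sum_distrib_left sum_divide_distrib sum_distrib_right)
    finally show "emeasure lborel (\<Union>i\<in>{..<d}. ?E i) \<le> ennreal (3 * (\<Sum>i<d. \<bar>x i - y i\<bar>) * M / L)" .
  qed
  also have "\<dots> = ennreal (3 * (\<Sum>i<d. \<bar>x i - y i\<bar>) * M / L / M)"
    using M L by (intro divide_ennreal) (auto intro!: sum_nonneg)
  also have "3 * (\<Sum>i<d. \<bar>x i - y i\<bar>) * M / L / M = 3 * (\<Sum>i<d. \<bar>x i - y i\<bar>) * 2^h / (2*M)"
    unfolding L_def using M by (simp add: field_simps)
  finally show ?thesis .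
qed




abbreviation mu3 :: "real \<Rightarrow> (real \<times> real \<times> real) measure" where
  "mu3 M \<equiv> shift_distr M \<Otimes>\<^sub>M (shift_distr M \<Otimes>\<^sub>M shift_distr M)"

lemma prob_space_mu3: "prob_space (mu3 M)"
  by (intro prob_space_pair prob_space_shift_distr)

lemma emeasure_mu3_space: "emeasure (mu3 M) (space (mu3 M)) = 1"
  using prob_space_mu3 prob_space.emeasure_space_1 by blast

lemma cube_sets: "A \<in> sets borel \<Longrightarrow> A \<times> (A \<times> A) \<in> sets (mu3 M)"
  by (intro pair_measureI) auto

lemma emeasure_cube: "A \<in> sets borel \<Longrightarrow>
  emeasure (mu3 M) (A \<times> (A \<times> A)) = emeasure (shift_distr M) A * (emeasure (shift_distr M) A * emeasure (shift_distr M) A)"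
proof -
  assume A: "A \<in> sets borel"
  interpret s1: sigma_finite_measure "shift_distr M"
    using prob_space_shift_distr prob_space_imp_sigma_finite by blast
  interpret s2: sigma_finite_measure "shift_distr M \<Otimes>\<^sub>M shift_distr M"
    using prob_space_pair[OF prob_space_shift_distr prob_space_shift_distr] prob_space_imp_sigma_finite by blast
  have "emeasure (mu3 M) (A \<times> (A \<times> A)) = emeasure (shift_distr M) A * emeasure (shift_distr M \<Otimes>\<^sub>M shift_distr M) (A \<times> A)"
    using A by (intro s2.emeasure_pair_measure_Times) (auto intro: pair_measureI)
  also have "emeasure (shift_distr M \<Otimes>\<^sub>M shift_distr M) (A \<times> A) = emeasure (shift_distr M) A * emeasure (shift_distr M) A"
    using A by (intro s1.emeasure_pair_measure_Times) auto
  finally show ?thesis .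
qed

lemma MTD_le:
  "MultiTreeDist d P M p0 ss x y \<le> TreeDist d P M p0 (fst ss) x y"
  "MultiTreeDist d P M p0 ss x y \<le> TreeDist d P M p0 (fst (snd ss)) x y"
  "MultiTreeDist d P M p0 ss x y \<le> TreeDist d P M p0 (snd (snd ss)) x y"
  unfolding MultiTreeDist_def by auto

lemma MTD_nonneg: "M \<ge> 0 \<Longrightarrow> MultiTreeDist d P M p0 ss x y \<ge> 0"
  unfolding MultiTreeDist_def using TreeDist_nonneg by auto

lemma MTD_self[simp]: "MultiTreeDist d P M p0 ss x x = 0"
  unfolding MultiTreeDist_def by simp

lemma Dist_le_MTD:
  assumes "finite P" "\<forall>z\<in>P. in_Rd d z" "x \<in> P" "y \<in> P" "M > 0" "d \<ge> 1"
    "max_pair_dist d P \<le> M"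
  shows "Dist d x y \<le> MultiTreeDist d P M p0 ss x y"
  unfolding MultiTreeDist_def using Dist_le_TreeDist[OF assms] by auto

definition vv :: "nat \<Rightarrow> real \<Rightarrow> nat \<Rightarrow> real" where
  "vv d M h = 4 * sqrt (real d) * M / 2^h"

definition SepSet :: "nat \<Rightarrow> real \<Rightarrow> pt \<Rightarrow> nat \<Rightarrow> pt \<Rightarrow> pt \<Rightarrow> real set" where
  "SepSet d M p0 h x y = {s. \<not> same_node d M p0 s h x y}"

definition Hlev :: "nat \<Rightarrow> real \<Rightarrow> pt \<Rightarrow> pt \<Rightarrow> nat" where
  "Hlev d M x y = (LEAST H. M \<le> 2^H * (sqrt (real d) * Dist d x y))"

definition Phi :: "nat \<Rightarrow> real \<Rightarrow> pt \<Rightarrow> pt \<Rightarrow> pt \<Rightarrow> real \<times> real \<times> real \<Rightarrow> ennreal" where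
  "Phi d M p0 x y ss = (if x = y then 0 else
     ennreal ((vv d M (Hlev d M x y))^2) +
     (\<Sum>l<Hlev d M x y. ennreal ((vv d M l)^2) *
        indicator (SepSet d M p0 (Suc l) x y \<times> (SepSet d M p0 (Suc l) x y \<times> SepSet d M p0 (Suc l) x y)) ss))"

lemma SepSet_meas: "SepSet d M p0 h x y \<in> sets borel"
  unfolding SepSet_def by (rule sep_set_meas)

lemma Phi_meas: "Phi d M p0 x y \<in> borel_measurable (mu3 M)"
proof -
  have [measurable]: "\<And>l. SepSet d M p0 (Suc l) x y \<times> (SepSet d M p0 (Suc l) x y \<times> SepSet d M p0 (Suc l) x y) \<in> sets (mu3 M)"
    by (intro cube_sets SepSet_meas)
  show ?thesis unfolding Phi_def by measurable
qed

lemma vv_anti: "M \<ge> 0 \<Longrightarrow> a \<le> b \<Longrightarrow> vv d M b \<le> vv d M a"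
  unfolding vv_def by (intro divide_left_mono) (auto intro: power_increasing)

lemma vv_nonneg: "M \<ge> 0 \<Longrightarrow> vv d M a \<ge> 0"
  unfolding vv_def by simp

lemma Phi_pointwise:
  assumes "in_Rd d x" "in_Rd d y" "M > 0"
  shows "ennreal ((MultiTreeDist d P M p0 ss x y)^2) \<le> Phi d M p0 x y ss"
proof (cases "x = y")
  case True then show ?thesis unfolding Phi_def by simp
next
  case False
  define l1 where "l1 = lca_height d M p0 (fst ss) x y"
  define l2 where "l2 = lca_height d M p0 (fst (snd ss)) x y"
  define l3 where "l3 = lca_height d M p0 (snd (snd ss)) x y"
  define l where "l = max l1 (max l2 l3)"
  define H where "H = Hlev d M x y"
  let ?D = "MultiTreeDist d P M p0 ss x y"
  have M0: "M \<ge> 0" using assms by simp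
  have D0: "?D \<ge> 0" using MTD_nonneg M0 by blast
  have t1: "?D \<le> vv d M l1" using MTD_le(1)[of d P M p0 ss x y] TreeDist_upper[OF M0, of d P p0 "fst ss" x y]
    unfolding vv_def l1_def by linarith
  have t2: "?D \<le> vv d M l2" using MTD_le(2)[of d P M p0 ss x y] TreeDist_upper[OF M0, of d P p0 "fst (snd ss)" x y]
    unfolding vv_def l2_def by linarith
  have t3: "?D \<le> vv d M l3" using MTD_le(3)[of d P M p0 ss x y] TreeDist_upper[OF M0, of d P p0 "snd (snd ss)" x y]
    unfolding vv_def l3_def by linarith
  have Dl: "?D \<le> vv d M l"
    using t1 t2 t3 unfolding l_def by (auto simp: max_def)
  have sq: "?D^2 \<le> (vv d M l)^2" using Dl D0 by (intro power_mono) auto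
  have rest_nonneg: "0 \<le> (\<Sum>l<H. ennreal ((vv d M l)^2) *
        indicator (SepSet d M p0 (Suc l) x y \<times> (SepSet d M p0 (Suc l) x y \<times> SepSet d M p0 (Suc l) x y)) ss)"
    by simp
  show ?thesis
  proof (cases "H \<le> l")
    case True
    have "(vv d M l)^2 \<le> (vv d M H)^2"
      using vv_anti[OF M0 True] vv_nonneg[OF M0] by (intro power_mono) auto
    then have "ennreal (?D^2) \<le> ennreal ((vv d M H)^2)" using sq by (intro ennreal_leI) linarith
    also have "\<dots> \<le> Phi d M p0 x y ss"
      unfolding Phi_def H_def[symmetric] using False by simp
    finally show ?thesis .
  next
    case False2: False
    have sepj: "\<And>s. lca_height d M p0 s x y \<le> l \<Longrightarrow> s \<in> SepSet d M p0 (Suc l) x y"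
    proof -
      fix s assume le: "lca_height d M p0 s x y \<le> l"
      have "\<not> same_node d M p0 s (Suc (lca_height d M p0 s x y)) x y"
        using lca_sep assms False by blast
      then show "s \<in> SepSet d M p0 (Suc l) x y"
        unfolding SepSet_def using same_node_mono[of "Suc (lca_height d M p0 s x y)" "Suc l"] le by auto
    qed
    have mem: "ss \<in> SepSet d M p0 (Suc l) x y \<times> (SepSet d M p0 (Suc l) x y \<times> SepSet d M p0 (Suc l) x y)"
      using sepj[of "fst ss"] sepj[of "fst (snd ss)"] sepj[of "snd (snd ss)"]
      unfolding l_def l1_def l2_def l3_def by (cases ss) auto
    have "ennreal (?D^2) \<le> ennreal ((vv d M l)^2)" using sq by (rule ennreal_leI)
    also have "\<dots> = ennreal ((vv d M l)^2) *
        indicator (SepSet d M p0 (Suc l) x y \<times> (SepSet d M p0 (Suc l) x y \<times> SepSet d M p0 (Suc l) x y)) ss"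
      using mem by simp
    also have "\<dots> \<le> (\<Sum>l<H. ennreal ((vv d M l)^2) *
        indicator (SepSet d M p0 (Suc l) x y \<times> (SepSet d M p0 (Suc l) x y \<times> SepSet d M p0 (Suc l) x y)) ss)"
      using False2 by (intro member_le_sum) auto
    also have "\<dots> \<le> Phi d M p0 x y ss"
      unfolding Phi_def H_def[symmetric] using False by (simp add: add_increasing)
    finally show ?thesis .
  qed
qed


lemma sum_pow2_le: "(\<Sum>l<H. (2::real)^l) \<le> 2^H - 1"
  by (induction H) auto

lemma Hlev_props:
  assumes t: "sqrt (real d) * Dist d x y > 0"
  shows "M \<le> 2^(Hlev d M x y) * (sqrt (real d) * Dist d x y)"
    and "Hlev d M x y > 0 \<Longrightarrow> 2^(Hlev d M x y - 1) * (sqrt (real d) * Dist d x y) < M"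
proof -
  let ?t = "sqrt (real d) * Dist d x y"
  obtain n where n: "M / ?t < 2^n" using real_arch_pow[of 2 "M / ?t"] by auto
  then have "M \<le> 2^n * ?t" using t by (simp add: divide_less_eq)
  then have ex: "\<exists>H. M \<le> 2^H * ?t" by blast
  show "M \<le> 2^(Hlev d M x y) * ?t" unfolding Hlev_def by (rule LeastI_ex[OF ex])
  assume "Hlev d M x y > 0"
  then have "Hlev d M x y - 1 < Hlev d M x y" by simp
  then have "\<not> M \<le> 2^(Hlev d M x y - 1) * ?t" unfolding Hlev_def by (rule not_less_Least)
  then show "2^(Hlev d M x y - 1) * ?t < M" by simp
qed

lemma term_eq:
  assumes "M > 0"
  shows "(vv d M l)^2 * (3 * t * 2^l / M)^3 = 432 * real d * t^3 * 2^l / M"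
proof -
  have "(vv d M l)^2 = 16 * real d * M^2 / (2^l)^2"
    unfolding vv_def by (simp add: power_mult_distrib power_divide)
  moreover have "(3 * t * 2^l / M)^3 = 27 * t^3 * (2^l)^3 / M^3"
    by (simp add: power_mult_distrib power_divide)
  ultimately show ?thesis using assms by (simp add: field_simps power2_eq_square power3_eq_cube)
qed

lemma Phi_integral:
  assumes x: "in_Rd d x" and y: "in_Rd d y" and M: "M > 0" and d: "d \<ge> 1"
  shows "(\<integral>\<^sup>+ss. Phi d M p0 x y ss \<partial>mu3 M) \<le> ennreal (880 * (real d)^2 * (Dist d x y)^2)"
proof (cases "x = y")
  case True then show ?thesis unfolding Phi_def by simp
next
  case False
  define t where "t = sqrt (real d) * Dist d x y"
  define H where "H = Hlev d M x y"
  define C where "C = (\<lambda>l. SepSet d M p0 (Suc l) x y \<times> (SepSet d M p0 (Suc l) x y \<times> SepSet d M p0 (Suc l) x y))"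
  have Dp: "Dist d x y > 0" using Dist_pos x y False by blast
  have t: "t > 0" unfolding t_def using Dp d by simp
  have S1: "(\<Sum>i<d. \<bar>x i - y i\<bar>) \<le> t" unfolding t_def by (rule Dist_L1)
  have CS: "\<And>l. C l \<in> sets (mu3 M)" unfolding C_def by (intro cube_sets SepSet_meas)
  have mA: "\<And>l. emeasure (shift_distr M) (SepSet d M p0 (Suc l) x y) \<le> ennreal (3 * t * 2^l / M)"
  proof -
    fix l
    have "emeasure (shift_distr M) (SepSet d M p0 (Suc l) x y)
        \<le> ennreal (3 * (\<Sum>i<d. \<bar>x i - y i\<bar>) * 2^(Suc l) / (2*M))"
      unfolding SepSet_def by (rule sep_prob[OF M]) simp
    also have "\<dots> \<le> ennreal (3 * t * 2^l / M)"
    proof (rule ennreal_leI)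
      have "3 * (\<Sum>i<d. \<bar>x i - y i\<bar>) * 2^(Suc l) / (2*M) = (3 * (\<Sum>i<d. \<bar>x i - y i\<bar>) * 2^l) / M"
        by simp
      also have "\<dots> \<le> (3 * t * 2^l) / M" using S1 M by (intro divide_right_mono) auto
      finally show "3 * (\<Sum>i<d. \<bar>x i - y i\<bar>) * 2^(Suc l) / (2*M) \<le> 3 * t * 2^l / M" .
    qed
    finally show "emeasure (shift_distr M) (SepSet d M p0 (Suc l) x y) \<le> ennreal (3 * t * 2^l / M)" .
  qed
  have mC: "\<And>l. emeasure (mu3 M) (C l) \<le> ennreal ((3 * t * 2^l / M)^3)"
  proof -
    fix l
    let ?a = "emeasure (shift_distr M) (SepSet d M p0 (Suc l) x y)"
    let ?q = "3 * t * 2^l / M"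
    have q0: "?q \<ge> 0" using t M by simp
    have "emeasure (mu3 M) (C l) = ?a * (?a * ?a)" unfolding C_def by (intro emeasure_cube SepSet_meas)
    also have "\<dots> \<le> ennreal ?q * (ennreal ?q * ennreal ?q)"
      using mA[of l] by (intro mult_mono) auto
    also have "\<dots> = ennreal (?q * (?q * ?q))" by (metis ennreal_mult mult_nonneg_nonneg q0)
    also have "?q * (?q * ?q) = ?q^3" by (metis power3_eq_cube mult.assoc)
    finally show "emeasure (mu3 M) (C l) \<le> ennreal (?q^3)" .
  qed
  have "(\<integral>\<^sup>+ss. Phi d M p0 x y ss \<partial>mu3 M)
      = (\<integral>\<^sup>+ss. ennreal ((vv d M H)^2) + (\<Sum>l<H. ennreal ((vv d M l)^2) * indicator (C l) ss) \<partial>mu3 M)"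
    unfolding Phi_def H_def C_def using False by simp
  also have "\<dots> = ennreal ((vv d M H)^2) + (\<Sum>l<H. ennreal ((vv d M l)^2) * emeasure (mu3 M) (C l))"
  proof -
    have [measurable]: "\<And>l. C l \<in> sets (mu3 M)" by (rule CS)
    have m: "(\<lambda>ss. \<Sum>l<H. ennreal ((vv d M l)^2) * indicator (C l) ss) \<in> borel_measurable (mu3 M)"
      by measurable
    have "(\<integral>\<^sup>+ss. ennreal ((vv d M H)^2) + (\<Sum>l<H. ennreal ((vv d M l)^2) * indicator (C l) ss) \<partial>mu3 M)
      = (\<integral>\<^sup>+ss. ennreal ((vv d M H)^2) \<partial>mu3 M) + (\<integral>\<^sup>+ss. (\<Sum>l<H. ennreal ((vv d M l)^2) * indicator (C l) ss) \<partial>mu3 M)"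
      by (rule nn_integral_add[OF _ m]) simp
    also have "(\<integral>\<^sup>+ss. ennreal ((vv d M H)^2) \<partial>mu3 M) = ennreal ((vv d M H)^2)"
      by (simp add: emeasure_mu3_space)
    also have "(\<integral>\<^sup>+ss. (\<Sum>l<H. ennreal ((vv d M l)^2) * indicator (C l) ss) \<partial>mu3 M)
       = (\<Sum>l<H. (\<integral>\<^sup>+ss. ennreal ((vv d M l)^2) * indicator (C l) ss \<partial>mu3 M))"
      by (rule nn_integral_sum) measurable
    also have "\<dots> = (\<Sum>l<H. ennreal ((vv d M l)^2) * emeasure (mu3 M) (C l))"
      by (intro sum.cong refl nn_integral_cmult_indicator CS)
    finally show ?thesis .
  qed
  also have "\<dots> \<le> ennreal ((vv d M H)^2) + (\<Sum>l<H. ennreal ((vv d M l)^2) * ennreal ((3 * t * 2^l / M)^3))"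
    using mC by (intro add_left_mono sum_mono mult_left_mono) auto
  also have "\<dots> = ennreal ((vv d M H)^2) + (\<Sum>l<H. ennreal (432 * real d * t^3 * 2^l / M))"
    using M t by (simp add: ennreal_mult[symmetric] term_eq)
  also have "\<dots> = ennreal ((vv d M H)^2) + ennreal (\<Sum>l<H. 432 * real d * t^3 * 2^l / M)"
    using M t by (subst sum_ennreal) auto
  also have "\<dots> = ennreal ((vv d M H)^2 + (\<Sum>l<H. 432 * real d * t^3 * 2^l / M))"
    using M t by (intro ennreal_plus[symmetric] sum_nonneg) auto
  also have "\<dots> \<le> ennreal (880 * (real d)^2 * (Dist d x y)^2)"
  proof (rule ennreal_leI)
    have tt: "t^2 = real d * (Dist d x y)^2" unfolding t_def by (simp add: power_mult_distrib)
    have MH: "M \<le> 2^H * t" unfolding H_def t_def using Hlev_props(1) t t_def by blast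
    have v: "(vv d M H)^2 \<le> 16 * real d * t^2"
    proof -
      have "(vv d M H)^2 = 16 * real d * (M / 2^H)^2"
        unfolding vv_def by (simp add: power_mult_distrib power_divide)
      also have "M / 2^H \<le> t" using MH by (simp add: divide_le_eq mult.commute)
      then have "(M / 2^H)^2 \<le> t^2" using M by (intro power_mono) auto
      then have "16 * real d * (M / 2^H)^2 \<le> 16 * real d * t^2" by (intro mult_left_mono) auto
      finally show ?thesis .
    qed
    have s: "(\<Sum>l<H. 432 * real d * t^3 * 2^l / M) \<le> 864 * real d * t^2"
    proof (cases "H = 0")
      case True then show ?thesis using t by simp
    next
      case False
      have lt: "2^(H - 1) * t < M" unfolding H_def t_def using Hlev_props(2) t t_def False H_def by blast
      have "2^H = 2 * (2::real)^(H-1)" using False by (metis power_eq_if)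
      then have lt2: "2^H * t < 2 * M" using lt by simp
      have "(\<Sum>l<H. 432 * real d * t^3 * 2^l / M) = 432 * real d * t^3 / M * (\<Sum>l<H. 2^l)"
        by (simp add: sum_distrib_left)
      also have "\<dots> \<le> 432 * real d * t^3 / M * 2^H"
        using sum_pow2_le[of H] t M by (intro mult_left_mono) auto
      also have "\<dots> = 432 * real d * t^2 * (2^H * t / M)" by (simp add: power2_eq_square power3_eq_cube)
      also have "\<dots> \<le> 432 * real d * t^2 * 2"
        using lt2 M t by (intro mult_left_mono) (auto simp: divide_le_eq)
      finally show ?thesis by simp
    qed
    show "(vv d M H)^2 + (\<Sum>l<H. 432 * real d * t^3 * 2^l / M) \<le> 880 * (real d)^2 * (Dist d x y)^2"
      using v s tt by (simp add: power2_eq_square)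
  qed
  finally show ?thesis .
qed




definition pp :: "nat \<Rightarrow> pt set \<Rightarrow> real \<Rightarrow> real \<Rightarrow> pt \<Rightarrow> real \<times> real \<times> real \<Rightarrow> (pt list \<Rightarrow> pt \<Rightarrow> pt)
   \<Rightarrow> pt list \<Rightarrow> real" where
  "pp d P c M p0 ss Query S = (\<Sum>x\<in>P. sample_prob d P M p0 ss S x * accept_prob d P c M p0 ss Query S x)"

fun gg :: "nat \<Rightarrow> pt set \<Rightarrow> real \<Rightarrow> real \<Rightarrow> pt \<Rightarrow> real \<times> real \<times> real \<Rightarrow> (pt list \<Rightarrow> pt \<Rightarrow> pt)
   \<Rightarrow> nat \<Rightarrow> pt list \<Rightarrow> ennreal" where
  "gg d P c M p0 ss Query 0 S = 0"
| "gg d P c M p0 ss Query (Suc n) S = inverse (ennreal (pp d P c M p0 ss Query S)) +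
     (\<Sum>x\<in>P. ennreal (sample_prob d P M p0 ss S x * accept_prob d P c M p0 ss Query S x)
        * inverse (ennreal (pp d P c M p0 ss Query S)) * gg d P c M p0 ss Query n (S @ [x]))"

lemma sample_prob_nonneg: "sample_prob d P M p0 ss S x \<ge> 0"
  unfolding sample_prob_def by (auto intro!: divide_nonneg_nonneg sum_nonneg)

lemma accept_prob_nonneg: "accept_prob d P c M p0 ss Query S x \<ge> 0"
  unfolding accept_prob_def by (auto intro!: divide_nonneg_nonneg)

lemma accept_prob_le1: "accept_prob d P c M p0 ss Query S x \<le> 1"
  unfolding accept_prob_def by auto

lemma sample_sum:
  assumes "pp d P c M p0 ss Query S > 0"
  shows "(\<Sum>x\<in>P. sample_prob d P M p0 ss S x) = 1"
proof -
  let ?T = "\<Sum>y\<in>P. (MultiTreeDist_set d P M p0 ss S y)^2"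
  have "?T \<noteq> 0"
  proof
    assume "?T = 0"
    then have "\<And>x. sample_prob d P M p0 ss S x = 0" unfolding sample_prob_def by simp
    then show False using assms unfolding pp_def by simp
  qed
  then show ?thesis unfolding sample_prob_def by (simp add: sum_divide_distrib[symmetric])
qed

lemma iter_step_le:
  "iter_step d P k c M p0 ss Query (\<lambda>S. gg d P c M p0 ss Query (k - length S) S) S
     \<le> gg d P c M p0 ss Query (k - length S) S"
proof (cases "k \<le> length S")
  case True then show ?thesis unfolding iter_step_def by simp
next
  case kF: False
  then obtain n where n: "k - length S = Suc n" by (metis Suc_diff_Suc not_le)
  have n2: "k - length (S @ [x]) = n" for x using n by simp
  let ?p = "pp d P c M p0 ss Query S"
  let ?sp = "sample_prob d P M p0 ss S" and ?ap = "accept_prob d P c M p0 ss Query S"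
  let ?G = "\<lambda>x. gg d P c M p0 ss Query n (S @ [x])"
  let ?GS = "gg d P c M p0 ss Query (Suc n) S"
  define B where "B = (\<Sum>x\<in>P. ennreal (?sp x * ?ap x) * ?G x)"
  have p0: "?p \<ge> 0" unfolding pp_def
    by (intro sum_nonneg mult_nonneg_nonneg sample_prob_nonneg accept_prob_nonneg)
  show ?thesis
  proof (cases "?p = 0")
    case True
    then show ?thesis unfolding n by simp
  next
    case False
    then have pos: "?p > 0" using p0 by simp
    have ssum: "(\<Sum>x\<in>P. ?sp x) = 1" by (rule sample_sum[OF pos])
    have p1: "?p \<le> 1"
    proof -
      have "?p \<le> (\<Sum>x\<in>P. ?sp x)" unfolding pp_def
        by (intro sum_mono) (metis accept_prob_le1 mult_left_mono mult.right_neutral sample_prob_nonneg)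
      then show ?thesis using ssum by simp
    qed
    have GS: "?GS = inverse (ennreal ?p) * (1 + B)"
    proof -
      have "?GS = inverse (ennreal ?p) + (\<Sum>x\<in>P. inverse (ennreal ?p) * (ennreal (?sp x * ?ap x) * ?G x))"
        by (simp add: mult_ac)
      also have "\<dots> = inverse (ennreal ?p) * (1 + B)"
        unfolding B_def by (simp add: sum_distrib_left distrib_left)
      finally show ?thesis .
    qed
    have "iter_step d P k c M p0 ss Query (\<lambda>S. gg d P c M p0 ss Query (k - length S) S) S
        = 1 + (\<Sum>x\<in>P. ennreal (?sp x) * (ennreal (?ap x) * ?G x + ennreal (1 - ?ap x) * ?GS))"
      unfolding iter_step_def n2 n using kF by simp
    also have "\<dots> = 1 + (B + (\<Sum>x\<in>P. ennreal (?sp x * (1 - ?ap x))) * ?GS)"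
    proof -
      have "\<And>x. ennreal (?sp x) * (ennreal (?ap x) * ?G x + ennreal (1 - ?ap x) * ?GS)
           = ennreal (?sp x * ?ap x) * ?G x + ennreal (?sp x * (1 - ?ap x)) * ?GS"
        by (simp add: distrib_left ennreal_mult sample_prob_nonneg accept_prob_nonneg accept_prob_le1 mult.assoc)
      then show ?thesis unfolding B_def by (simp add: sum.distrib sum_distrib_right)
    qed
    also have "(\<Sum>x\<in>P. ennreal (?sp x * (1 - ?ap x))) = ennreal (1 - ?p)"
    proof -
      have "(\<Sum>x\<in>P. ennreal (?sp x * (1 - ?ap x))) = ennreal (\<Sum>x\<in>P. ?sp x * (1 - ?ap x))"
        by (intro sum_ennreal mult_nonneg_nonneg sample_prob_nonneg) (simp add: accept_prob_le1)
      also have "(\<Sum>x\<in>P. ?sp x * (1 - ?ap x)) = 1 - ?p"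
        unfolding pp_def using ssum by (simp add: right_diff_distrib sum_subtractf)
      finally show ?thesis .
    qed
    also have "1 + (B + ennreal (1 - ?p) * ?GS) = (1 + B) * (1 + ennreal (1 - ?p) * inverse (ennreal ?p))"
      unfolding GS by (simp add: algebra_simps)
    also have "1 + ennreal (1 - ?p) * inverse (ennreal ?p) = inverse (ennreal ?p)"
    proof -
      have "1 + ennreal (1 - ?p) * inverse (ennreal ?p) = ennreal (1 + (1 - ?p) * inverse ?p)"
        using pos p1 by (simp add: inverse_ennreal ennreal_mult ennreal_plus[symmetric])
      also have "1 + (1 - ?p) * inverse ?p = inverse ?p" using pos by (simp add: field_simps)
      finally show ?thesis using pos by (simp add: inverse_ennreal)
    qed
    finally show ?thesis unfolding n GS by (simp add: mult_ac)
  qed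
qed

lemma lfp_le_gg:
  "lfp (iter_step d P k c M p0 ss Query) [] \<le> gg d P c M p0 ss Query k []"
proof -
  have "lfp (iter_step d P k c M p0 ss Query) \<le> (\<lambda>S. gg d P c M p0 ss Query (k - length S) S)"
    by (rule lfp_lowerbound) (auto simp: le_fun_def iter_step_le)
  then show ?thesis unfolding le_fun_def by (metis list.size(3) minus_nat.diff_0)
qed




locale setting =
  fixes d :: nat and P :: "pt set" and k :: nat and c :: real and M :: real and p0 :: pt
    and Query :: "pt list \<Rightarrow> pt \<Rightarrow> pt"
  assumes d1: "d \<ge> 1" and finP: "finite P" and Pne: "P \<noteq> {}" and inR: "\<forall>x\<in>P. in_Rd d x"
    and kP: "k \<le> card P" and c1: "c > 1" and Mmax: "max_pair_dist d P \<le> M"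
    and lsh: "lsh_successful d c P Query"
begin

definition Dq where "Dq S x = Dist d x (Query S x)"
definition Qs where "Qs S = (\<Sum>y\<in>P. (Dq S y)^2)"
definition good0 where "good0 S \<longleftrightarrow> set S \<subseteq> P \<and> distinct S \<and> length S < card P"
definition ww where "ww S x = (if S = [] then 1 / real (card P) else (Dq S x)^2 / Qs S)"
definition Psi where "Psi S ss = (if S = [] then 1 else if good0 S then
   ennreal (c^2 / Qs S) * (\<Sum>y\<in>P. Phi d M p0 y (Query S y) ss) else top)"

abbreviation TT where "TT ss S \<equiv> (\<Sum>y\<in>P. (MultiTreeDist_set d P M p0 ss S y)^2)"
abbreviation MTs where "MTs ss S x \<equiv> MultiTreeDist_set d P M p0 ss S x"
abbreviation sp where "sp ss S x \<equiv> sample_prob d P M p0 ss S x"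
abbreviation ap where "ap ss S x \<equiv> accept_prob d P c M p0 ss Query S x"
abbreviation ppp where "ppp ss S \<equiv> pp d P c M p0 ss Query S"

fun gh :: "nat \<Rightarrow> pt list \<Rightarrow> real \<times> real \<times> real \<Rightarrow> ennreal" where
  "gh 0 S ss = 0"
| "gh (Suc n) S ss = Psi S ss + (\<Sum>x\<in>P. ennreal (ww S x) * gh n (S @ [x]) ss)"

lemma M_nonneg: "M \<ge> 0"
proof -
  obtain x where "x \<in> P" using Pne by blast
  then have "Dist d x x \<le> max_pair_dist d P" using Dist_le_max_pair finP by blast
  then show ?thesis using Mmax by simp
qed

lemma c0: "c > 0" using c1 by simp

lemma lshD:
  assumes "S \<noteq> []" "set S \<subseteq> P" "x \<in> P"
  shows "Query S x \<in> set S" "Dq S x \<le> c * Min ((\<lambda>y. Dist d x y) ` set S)"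
  using lsh assms unfolding lsh_successful_def Dq_def by auto

lemma Dq_nonneg: "Dq S x \<ge> 0" unfolding Dq_def by (rule Dist_nonneg)

lemma Dq_le_Dist:
  assumes "S \<noteq> []" "set S \<subseteq> P" "x \<in> P" "z \<in> set S"
  shows "Dq S x \<le> c * Dist d x z"
proof -
  have "Min ((\<lambda>y. Dist d x y) ` set S) \<le> Dist d x z" using assms by (intro Min_le) auto
  then show ?thesis using lshD(2)[OF assms(1-3)] c0 by (meson mult_left_mono less_imp_le order_trans)
qed

lemma Dq_in_S:
  assumes "S \<noteq> []" "set S \<subseteq> P" "x \<in> P" "x \<in> set S"
  shows "Dq S x = 0"
  using Dq_le_Dist[OF assms] Dq_nonneg[of S x] by simp

lemma good_notin:
  assumes "good0 S"
  shows "\<exists>y\<in>P. y \<notin> set S"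
proof (rule ccontr)
  assume "\<not> ?thesis"
  then have "P \<subseteq> set S" by auto
  then have "card P \<le> card (set S)" by (simp add: card_mono)
  also have "\<dots> = length S" using assms unfolding good0_def by (simp add: distinct_card)
  finally show False using assms unfolding good0_def by simp
qed

lemma M_pos:
  assumes "good0 S" "S \<noteq> []"
  shows "M > 0"
proof -
  obtain y where y: "y \<in> P" "y \<notin> set S" using good_notin assms by blast
  obtain z where z: "z \<in> set S" using assms by (cases S) auto
  have zP: "z \<in> P" using z assms unfolding good0_def by auto
  have "y \<noteq> z" using y z by auto
  then have "0 < Dist d y z" using Dist_pos inR y zP by blast
  also have "\<dots> \<le> max_pair_dist d P" using Dist_le_max_pair finP y zP by blast
  finally show ?thesis using Mmax by simp
qed

lemma Qs_pos:
  assumes "good0 S" "S \<noteq> []"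
  shows "Qs S > 0"
proof -
  obtain y where y: "y \<in> P" "y \<notin> set S" using good_notin assms by blast
  have SP: "set S \<subseteq> P" using assms unfolding good0_def by auto
  have q: "Query S y \<in> set S" using lshD(1)[OF assms(2) SP y(1)] .
  then have "Query S y \<noteq> y" using y by auto
  moreover have "Query S y \<in> P" using q SP by auto
  ultimately have "Dq S y > 0" unfolding Dq_def using Dist_pos inR y by metis
  then have "0 < (Dq S y)^2" by simp
  also have "\<dots> \<le> Qs S" unfolding Qs_def using y finP by (intro member_le_sum) auto
  finally show ?thesis .
qed

lemma MTs_eq: "S \<noteq> [] \<Longrightarrow> MTs ss S x = Min ((\<lambda>y. MultiTreeDist d P M p0 ss x y) ` set S)"
  unfolding MultiTreeDist_set_def by simp

lemma MTs_attained:
  assumes "S \<noteq> []"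
  shows "\<exists>z\<in>set S. MTs ss S x = MultiTreeDist d P M p0 ss x z"
proof -
  have "Min ((\<lambda>y. MultiTreeDist d P M p0 ss x y) ` set S) \<in> (\<lambda>y. MultiTreeDist d P M p0 ss x y) ` set S"
    using assms by (intro Min_in) auto
  then show ?thesis using MTs_eq[OF assms] by auto
qed

lemma MTs_le: "S \<noteq> [] \<Longrightarrow> z \<in> set S \<Longrightarrow> MTs ss S x \<le> MultiTreeDist d P M p0 ss x z"
  using MTs_eq by (auto intro: Min_le)

lemma MTs_nonneg: "MTs ss S x \<ge> 0"
  using MTs_attained[of S ss x] MTD_nonneg[OF M_nonneg] unfolding MultiTreeDist_set_def
  by (cases "S = []") auto

lemma Dq_le_cMTs:
  assumes "good0 S" "S \<noteq> []" "x \<in> P"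
  shows "Dq S x \<le> c * MTs ss S x"
proof -
  have SP: "set S \<subseteq> P" using assms unfolding good0_def by auto
  obtain z where z: "z \<in> set S" "MTs ss S x = MultiTreeDist d P M p0 ss x z"
    using MTs_attained[OF assms(2)] by blast
  have zP: "z \<in> P" using z SP by auto
  have "Dist d x z \<le> MultiTreeDist d P M p0 ss x z"
    by (rule Dist_le_MTD[OF finP inR assms(3) zP M_pos[OF assms(1,2)] d1 Mmax])
  then have "c * Dist d x z \<le> c * MTs ss S x" using z c0 by simp
  then show ?thesis using Dq_le_Dist[OF assms(2) SP assms(3) z(1)] by linarith
qed

lemma TT_pos:
  assumes "good0 S" "S \<noteq> []"
  shows "TT ss S > 0"
proof -
  obtain y where y: "y \<in> P" "y \<notin> set S" using good_notin assms by blast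
  have SP: "set S \<subseteq> P" using assms unfolding good0_def by auto
  obtain z where z: "z \<in> set S" "MTs ss S y = MultiTreeDist d P M p0 ss y z"
    using MTs_attained[OF assms(2)] by blast
  have zP: "z \<in> P" using z SP by auto
  have "0 < Dist d y z" using Dist_pos inR y zP z by (metis)
  also have "\<dots> \<le> MTs ss S y"
    using Dist_le_MTD[OF finP inR y(1) zP M_pos[OF assms(1,2)] d1 Mmax] z by simp
  finally have "0 < (MTs ss S y)^2" by simp
  also have "\<dots> \<le> TT ss S" using y finP by (intro member_le_sum) auto
  finally show ?thesis .
qed

lemma spap:
  assumes "good0 S" "S \<noteq> []" "x \<in> P"
  shows "sp ss S x * ap ss S x = (Dq S x)^2 / (c^2 * TT ss S)"
proof -
  have T: "TT ss S > 0" using TT_pos assms by blast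
  have le: "Dq S x \<le> c * MTs ss S x" using Dq_le_cMTs assms by blast
  have m0: "MTs ss S x \<ge> 0" by (rule MTs_nonneg)
  show ?thesis
  proof (cases "MTs ss S x = 0")
    case True
    then have "Dq S x = 0" using le Dq_nonneg[of S x] by simp
    then show ?thesis using True unfolding sample_prob_def by simp
  next
    case False
    then have mp: "MTs ss S x > 0" using m0 by simp
    have "(Dq S x)^2 \<le> (c * MTs ss S x)^2" using le Dq_nonneg by (intro power_mono) auto
    then have r: "(Dq S x)^2 / (c^2 * (MTs ss S x)^2) \<le> 1"
      using mp c0 by (simp add: power_mult_distrib)
    have "ap ss S x = (Dq S x)^2 / (c^2 * (MTs ss S x)^2)"
      unfolding accept_prob_def Dq_def[symmetric] using assms(2) r by simp
    then show ?thesis unfolding sample_prob_def using mp T c0 by (simp add: field_simps)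
  qed
qed

lemma pp_eq:
  assumes "good0 S" "S \<noteq> []"
  shows "ppp ss S = Qs S / (c^2 * TT ss S)"
  unfolding pp_def Qs_def using spap[OF assms] by (simp add: sum_divide_distrib)

lemma inv_pp:
  assumes "good0 S" "S \<noteq> []"
  shows "inverse (ennreal (ppp ss S)) = ennreal (c^2 * TT ss S / Qs S)"
proof -
  have "ppp ss S > 0" using pp_eq[OF assms] Qs_pos[OF assms] TT_pos[OF assms] c0 by simp
  then show ?thesis using pp_eq[OF assms] by (simp add: inverse_ennreal)
qed

lemma weight_eq:
  assumes "good0 S" "S \<noteq> []" "x \<in> P"
  shows "ennreal (sp ss S x * ap ss S x) * inverse (ennreal (ppp ss S)) = ennreal (ww S x)"
proof -
  have T: "TT ss S > 0" using TT_pos assms by blast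
  have Q: "Qs S > 0" using Qs_pos assms by blast
  have A0: "0 \<le> (Dq S x)^2 / (c^2 * TT ss S)" using T by simp
  have B0: "0 \<le> c^2 * TT ss S / Qs S" using T Q by simp
  have "ennreal (sp ss S x * ap ss S x) * inverse (ennreal (ppp ss S))
      = ennreal ((Dq S x)^2 / (c^2 * TT ss S)) * ennreal (c^2 * TT ss S / Qs S)"
    by (simp only: spap[OF assms] inv_pp[OF assms(1,2)])
  also have "\<dots> = ennreal ((Dq S x)^2 / (c^2 * TT ss S) * (c^2 * TT ss S / Qs S))"
    by (rule ennreal_mult[OF A0 B0, symmetric])
  also have "(Dq S x)^2 / (c^2 * TT ss S) * (c^2 * TT ss S / Qs S) = ww S x"
    unfolding ww_def using assms(2) T c0 by simp
  finally show ?thesis .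
qed

lemma inv_pp_le_Psi:
  assumes "good0 S" "S \<noteq> []"
  shows "inverse (ennreal (ppp ss S)) \<le> Psi S ss"
proof -
  have SP: "set S \<subseteq> P" using assms unfolding good0_def by auto
  have Mp: "M > 0" using M_pos assms by blast
  have "inverse (ennreal (ppp ss S)) = ennreal (c^2 / Qs S) * ennreal (TT ss S)"
  proof -
    have Q: "Qs S > 0" using Qs_pos[OF assms] .
    have T0: "TT ss S \<ge> 0" by (intro sum_nonneg) simp
    have "c^2 * TT ss S / Qs S = c^2 / Qs S * TT ss S" by simp
    then show ?thesis unfolding inv_pp[OF assms] using ennreal_mult[of "c^2 / Qs S" "TT ss S"] Q T0 by simp
  qed
  also have "ennreal (TT ss S) = (\<Sum>y\<in>P. ennreal ((MTs ss S y)^2))"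
    by (simp add: sum_ennreal)
  also have "\<dots> \<le> (\<Sum>y\<in>P. Phi d M p0 y (Query S y) ss)"
  proof (intro sum_mono)
    fix y assume y: "y \<in> P"
    have q: "Query S y \<in> set S" using lshD(1)[OF assms(2) SP y] .
    have "(MTs ss S y)^2 \<le> (MultiTreeDist d P M p0 ss y (Query S y))^2"
      using MTs_le[OF assms(2) q] MTs_nonneg by (intro power_mono) auto
    then have "ennreal ((MTs ss S y)^2) \<le> ennreal ((MultiTreeDist d P M p0 ss y (Query S y))^2)"
      by (rule ennreal_leI)
    also have "\<dots> \<le> Phi d M p0 y (Query S y) ss"
      using Phi_pointwise[of d y "Query S y" M P p0 ss] inR y q SP Mp by auto
    finally show "ennreal ((MTs ss S y)^2) \<le> Phi d M p0 y (Query S y) ss" .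
  qed
  finally show ?thesis unfolding Psi_def using assms by (simp add: mult_left_mono)
qed

lemma empty_case:
  assumes "x \<in> P"
  shows "sp ss [] x * ap ss [] x = 1 / real (card P)"
  unfolding sample_prob_def accept_prob_def MultiTreeDist_set_def by simp

lemma pp_empty: "ppp ss [] = 1"
  unfolding pp_def using empty_case finP Pne by simp

lemma gg_le_gh: "gg d P c M p0 ss Query n S \<le> gh n S ss"
proof (induction n arbitrary: S)
  case 0 then show ?case by simp
next
  case (Suc n)
  show ?case
  proof (cases "S = []")
    case True
    have "gg d P c M p0 ss Query (Suc n) S = 1 + (\<Sum>x\<in>P. ennreal (1 / real (card P)) * gg d P c M p0 ss Query n (S @ [x]))"
      using True pp_empty empty_case by simp
    also have "\<dots> \<le> 1 + (\<Sum>x\<in>P. ennreal (1 / real (card P)) * gh n (S @ [x]) ss)"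
      using Suc.IH by (intro add_left_mono sum_mono mult_left_mono) auto
    also have "\<dots> = gh (Suc n) S ss" using True by (simp add: Psi_def ww_def)
    finally show ?thesis .
  next
    case Sne: False
    show ?thesis
    proof (cases "good0 S")
      case False
      then show ?thesis using Sne by (simp add: Psi_def)
    next
      case True
      have "gg d P c M p0 ss Query (Suc n) S = inverse (ennreal (ppp ss S)) +
        (\<Sum>x\<in>P. ennreal (ww S x) * gg d P c M p0 ss Query n (S @ [x]))"
        using weight_eq[OF True Sne] by simp
      also have "\<dots> \<le> Psi S ss + (\<Sum>x\<in>P. ennreal (ww S x) * gh n (S @ [x]) ss)"
        using Suc.IH inv_pp_le_Psi[OF True Sne] by (intro add_mono sum_mono mult_left_mono) auto
      also have "\<dots> = gh (Suc n) S ss" by simp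
      finally show ?thesis .
    qed
  qed
qed

end



context setting begin

definition BB where "BB = 880 * c^2 * (real d)^2"

lemma BB_ge1: "1 \<le> BB"
proof -
  have "1 \<le> c^2" using c1 by (simp add: one_le_power)
  moreover have "1 \<le> (real d)^2" using d1 by (simp add: one_le_power)
  ultimately have "1 \<le> c^2 * (real d)^2" by (metis mult_mono' mult_1 zero_le_one)
  then show ?thesis unfolding BB_def by simp
qed

lemma Psi_meas: "Psi S \<in> borel_measurable (mu3 M)"
proof -
  have [measurable]: "\<And>y z. Phi d M p0 y z \<in> borel_measurable (mu3 M)" by (rule Phi_meas)
  show ?thesis
  proof (cases "S = []")
    case True then show ?thesis unfolding Psi_def[abs_def] by simp
  next
    case False
    show ?thesis
    proof (cases "good0 S")
      case True
      then show ?thesis unfolding Psi_def[abs_def] using False by measurable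
    next
      case F2: False
      then show ?thesis unfolding Psi_def[abs_def] using False by simp
    qed
  qed
qed

lemma gh_meas: "gh n S \<in> borel_measurable (mu3 M)"
proof (induction n arbitrary: S)
  case 0 then show ?case by simp
next
  case (Suc n)
  have [measurable]: "\<And>S. gh n S \<in> borel_measurable (mu3 M)" by (rule Suc.IH)
  have [measurable]: "Psi S \<in> borel_measurable (mu3 M)" by (rule Psi_meas)
  have e: "gh (Suc n) S = (\<lambda>ss. Psi S ss + (\<Sum>x\<in>P. ennreal (ww S x) * gh n (S @ [x]) ss))"
    by (rule ext) simp
  show ?case unfolding e by measurable
qed

lemma ww_nonneg: "ww S x \<ge> 0"
  unfolding ww_def Qs_def by (auto intro!: divide_nonneg_nonneg sum_nonneg)

lemma ww_sum:
  assumes "S = [] \<or> good0 S"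
  shows "(\<Sum>x\<in>P. ww S x) = 1"
proof (cases "S = []")
  case True
  have "card P > 0" using finP Pne by (simp add: card_gt_0_iff)
  then show ?thesis using True unfolding ww_def by simp
next
  case False
  then have g: "good0 S" using assms by simp
  have "Qs S > 0" using Qs_pos[OF g False] .
  then show ?thesis using False unfolding ww_def Qs_def by (simp add: sum_divide_distrib[symmetric])
qed

lemma ww_in_S:
  assumes "set S \<subseteq> P" "x \<in> P" "x \<in> set S"
  shows "ww S x = 0"
proof -
  have "S \<noteq> []" using assms by auto
  then show ?thesis unfolding ww_def using Dq_in_S[OF _ assms] by simp
qed

lemma Psi_int:
  assumes "S = [] \<or> good0 S"
  shows "(\<integral>\<^sup>+ss. Psi S ss \<partial>mu3 M) \<le> ennreal BB"
proof (cases "S = []")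
  case True
  then have "(\<integral>\<^sup>+ss. Psi S ss \<partial>mu3 M) = 1" unfolding Psi_def by (simp add: emeasure_mu3_space)
  then show ?thesis using BB_ge1 by simp
next
  case False
  then have g: "good0 S" using assms by simp
  have SP: "set S \<subseteq> P" using g unfolding good0_def by auto
  have Mp: "M > 0" using M_pos[OF g False] .
  have Q: "Qs S > 0" using Qs_pos[OF g False] .
  have [measurable]: "\<And>y z. Phi d M p0 y z \<in> borel_measurable (mu3 M)" by (rule Phi_meas)
  have "(\<integral>\<^sup>+ss. Psi S ss \<partial>mu3 M) = (\<integral>\<^sup>+ss. ennreal (c^2 / Qs S) * (\<Sum>y\<in>P. Phi d M p0 y (Query S y) ss) \<partial>mu3 M)"
    using g False unfolding Psi_def by simp
  also have "\<dots> = ennreal (c^2 / Qs S) * (\<Sum>y\<in>P. (\<integral>\<^sup>+ss. Phi d M p0 y (Query S y) ss \<partial>mu3 M))"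
    by (subst nn_integral_cmult) (measurable, subst nn_integral_sum, auto)
  also have "\<dots> \<le> ennreal (c^2 / Qs S) * (\<Sum>y\<in>P. ennreal (880 * (real d)^2 * (Dq S y)^2))"
  proof (intro mult_left_mono sum_mono)
    fix y assume y: "y \<in> P"
    have q: "Query S y \<in> P" using lshD(1)[OF False SP y] SP by auto
    show "(\<integral>\<^sup>+ss. Phi d M p0 y (Query S y) ss \<partial>mu3 M) \<le> ennreal (880 * (real d)^2 * (Dq S y)^2)"
      unfolding Dq_def using Phi_integral[of d y "Query S y" M p0] inR y q Mp d1 by auto
  qed simp
  also have "\<dots> = ennreal (c^2 / Qs S) * ennreal (880 * (real d)^2 * Qs S)"
    unfolding Qs_def by (subst sum_ennreal) (auto simp: sum_distrib_left)
  also have "\<dots> = ennreal (c^2 / Qs S * (880 * (real d)^2 * Qs S))"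
    using Q by (intro ennreal_mult[symmetric]) auto
  also have "c^2 / Qs S * (880 * (real d)^2 * Qs S) = BB" unfolding BB_def using Q by simp
  finally show ?thesis .
qed

lemma gh_int:
  assumes "set S \<subseteq> P" "distinct S" "length S + n \<le> card P"
  shows "(\<integral>\<^sup>+ss. gh n S ss \<partial>mu3 M) \<le> ennreal (real n * BB)"
  using assms
proof (induction n arbitrary: S)
  case 0 then show ?case by simp
next
  case (Suc n)
  have g: "S = [] \<or> good0 S" using Suc.prems unfolding good0_def by auto
  have [measurable]: "\<And>S. gh n S \<in> borel_measurable (mu3 M)" by (rule gh_meas)
  have [measurable]: "Psi S \<in> borel_measurable (mu3 M)" by (rule Psi_meas)
  have B0: "BB \<ge> 0" using BB_ge1 by simp
  have E1: "(\<integral>\<^sup>+ss. gh (Suc n) S ss \<partial>mu3 M)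
      = (\<integral>\<^sup>+ss. Psi S ss \<partial>mu3 M) + (\<integral>\<^sup>+ss. (\<Sum>x\<in>P. ennreal (ww S x) * gh n (S @ [x]) ss) \<partial>mu3 M)"
  proof -
    have m2: "(\<lambda>ss. \<Sum>x\<in>P. ennreal (ww S x) * gh n (S @ [x]) ss) \<in> borel_measurable (mu3 M)"
      by measurable
    have "(\<integral>\<^sup>+ss. gh (Suc n) S ss \<partial>mu3 M) = (\<integral>\<^sup>+ss. Psi S ss + (\<Sum>x\<in>P. ennreal (ww S x) * gh n (S @ [x]) ss) \<partial>mu3 M)"
      by (simp only: gh.simps)
    also have "\<dots> = (\<integral>\<^sup>+ss. Psi S ss \<partial>mu3 M) + (\<integral>\<^sup>+ss. (\<Sum>x\<in>P. ennreal (ww S x) * gh n (S @ [x]) ss) \<partial>mu3 M)"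
      by (rule nn_integral_add[OF Psi_meas m2])
    finally show ?thesis .
  qed
  have "(\<integral>\<^sup>+ss. (\<Sum>x\<in>P. ennreal (ww S x) * gh n (S @ [x]) ss) \<partial>mu3 M)
      = (\<Sum>x\<in>P. ennreal (ww S x) * (\<integral>\<^sup>+ss. gh n (S @ [x]) ss \<partial>mu3 M))"
  proof -
    have "(\<integral>\<^sup>+ss. (\<Sum>x\<in>P. ennreal (ww S x) * gh n (S @ [x]) ss) \<partial>mu3 M)
      = (\<Sum>x\<in>P. (\<integral>\<^sup>+ss. ennreal (ww S x) * gh n (S @ [x]) ss \<partial>mu3 M))"
      by (rule nn_integral_sum) measurable
    also have "\<dots> = (\<Sum>x\<in>P. ennreal (ww S x) * (\<integral>\<^sup>+ss. gh n (S @ [x]) ss \<partial>mu3 M))"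
      by (intro sum.cong refl nn_integral_cmult gh_meas)
    finally show ?thesis .
  qed
  also have "\<dots> \<le> (\<Sum>x\<in>P. ennreal (ww S x) * ennreal (real n * BB))"
  proof (intro sum_mono)
    fix x assume x: "x \<in> P"
    show "ennreal (ww S x) * (\<integral>\<^sup>+ss. gh n (S @ [x]) ss \<partial>mu3 M) \<le> ennreal (ww S x) * ennreal (real n * BB)"
    proof (cases "x \<in> set S")
      case True
      then show ?thesis using ww_in_S[OF Suc.prems(1) x True] by simp
    next
      case False
      have "(\<integral>\<^sup>+ss. gh n (S @ [x]) ss \<partial>mu3 M) \<le> ennreal (real n * BB)"
        by (rule Suc.IH) (use Suc.prems x False in simp_all)
      then show ?thesis by (rule mult_left_mono) simp
    qed
  qed
  also have "\<dots> = ennreal (real n * BB)"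
  proof -
    have "(\<Sum>x\<in>P. ennreal (ww S x) * ennreal (real n * BB)) = (\<Sum>x\<in>P. ennreal (ww S x * (real n * BB)))"
      using B0 by (intro sum.cong refl ennreal_mult[symmetric] ww_nonneg) auto
    also have "\<dots> = ennreal (\<Sum>x\<in>P. ww S x * (real n * BB))"
      using B0 by (intro sum_ennreal mult_nonneg_nonneg ww_nonneg) auto
    also have "(\<Sum>x\<in>P. ww S x * (real n * BB)) = real n * BB"
      using ww_sum[OF g] by (simp add: sum_distrib_right[symmetric])
    finally show ?thesis .
  qed
  finally have E2: "(\<integral>\<^sup>+ss. (\<Sum>x\<in>P. ennreal (ww S x) * gh n (S @ [x]) ss) \<partial>mu3 M) \<le> ennreal (real n * BB)" .
  have "(\<integral>\<^sup>+ss. gh (Suc n) S ss \<partial>mu3 M) \<le> (\<integral>\<^sup>+ss. Psi S ss \<partial>mu3 M) + ennreal (real n * BB)"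
    unfolding E1 using E2 by (rule add_left_mono)
  also have "\<dots> \<le> ennreal BB + ennreal (real n * BB)"
    using Psi_int[OF g] by (rule add_right_mono)
  also have "\<dots> = ennreal (real (Suc n) * BB)"
  proof -
    have "ennreal BB + ennreal (real n * BB) = ennreal (BB + real n * BB)"
      using B0 by (intro ennreal_plus[symmetric]) auto
    also have "BB + real n * BB = real (Suc n) * BB" by (simp add: algebra_simps)
    finally show ?thesis .
  qed
  finally show ?case .
qed

lemma main_bound: "expected_iterations d P k c M p0 Query \<le> ennreal (880 * c^2 * (real d)^2 * real k)"
proof -
  have "expected_iterations d P k c M p0 Query \<le> (\<integral>\<^sup>+ss. gh k [] ss \<partial>mu3 M)"
    unfolding expected_iterations_def expected_iters_fixed_def
    by (intro nn_integral_mono) (metis lfp_le_gg gg_le_gh order_trans)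
  also have "\<dots> \<le> ennreal (real k * BB)" by (rule gh_int) (use kP in auto)
  also have "real k * BB = 880 * c^2 * (real d)^2 * real k" unfolding BB_def by simp
  finally show ?thesis .
qed

end

theorem mainTheorem8:
  "\<exists>C::real. C > 0 \<and>
     (\<forall>(d::nat) (P::pt set) (k::nat) (c::real) (M::real) (p0::pt) (Query::pt list \<Rightarrow> pt \<Rightarrow> pt).
        d \<ge> 1 \<and> finite P \<and> P \<noteq> {} \<and> (\<forall>x\<in>P. in_Rd d x) \<and> k \<le> card P \<and> c > 1 \<and>
        max_pair_dist d P \<le> M \<and> M \<le> 2 * max_pair_dist d P \<and> p0 \<in> P \<and>
        lsh_successful d c P Query
        \<longrightarrow> expected_iterations d P k c M p0 Query \<le> ennreal (C * c^2 * (real d)^2 * real k))"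
proof (intro exI[of _ 880] conjI allI impI)
  fix d P k c M p0 Query
  assume h: "d \<ge> 1 \<and> finite P \<and> P \<noteq> {} \<and> (\<forall>x\<in>P. in_Rd d x) \<and> k \<le> card P \<and> c > 1 \<and>
        max_pair_dist d P \<le> M \<and> M \<le> 2 * max_pair_dist d P \<and> p0 \<in> P \<and>
        lsh_successful d c P Query"
  interpret setting d P k c M p0 Query
    using h by unfold_locales auto
  show "expected_iterations d P k c M p0 Query \<le> ennreal (880 * c^2 * (real d)^2 * real k)"
    by (rule main_bound)
qed simp


end
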